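(* Let $\lambda=\lambda_1 f_1+\lambda_2 f_2$ be the highest weight of a non-trivial irreducible representation of $SU_3$ (with $f_1,f_2$ the fundamental weights and $\lambda_1,\lambda_2\in\mathbb{Z}_{\ge0}$), and assume $\lambda$ lies on the border of the Weyl chamber, i.e. $\lambda=(\lambda_1,0)$ or $\lambda=(0,\lambda_2)$, with $\lambda\ne(0,0)$. Let $T=\mathrm{diag}(1,0,-1)\in\mathfrak{sl}_3(\mathbb{C})$, and for $m\in\mathbb{N}$ let $\rho_{m\lambda}$ denote the irreducible representation of $SU_3$ (and of $\mathfrak{sl}_3(\mathbb{C})$) with highest weight $m\lambda$. Then the nearest neighbour distributions $\mu_{\rho_{m\lambda}(T)}$ converge to the Dirac measure $\delta_0$ as $m\to\infty$, in the Kolmogorov–Smirnov distance.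
   Context: For an $N\times N$ hermitian matrix $A$ with eigenvalues (with multiplicity) $x_1\le\dots\le x_N$, its nearest neighbour distribution is $\mu_A=\frac1N\sum_{j=1}^{N-1}\delta_{\frac{N}{x_N-x_1}(x_{j+1}-x_j)}$ if $x_1\ne x_N$, and $\mu_A=\frac{N-1}{N}\delta_0$ if all eigenvalues coincide. The Kolmogorov–Smirnov distance between finite Borel measures $\mu,\nu$ on $\mathbb{R}_{\ge0}$ is $\sup_{x\ge0}|\int_0^x d\mu-\int_0^x d\nu|$. Since $T\in i\,\mathfrak{su}_3$, $\rho_{m\lambda}(T)$ is hermitian. *)

theory Defs
  imports Complex_Main "Jordan_Normal_Form.Char_Poly" "HOL-Library.Multiset"
begin

(* Monomial basis of Sym^n(C^3): exponent vectors [a,b,c] with a+b+c = n. *)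
definition sym_basis :: "nat \<Rightarrow> nat list list" where
  "sym_basis n = concat (map (\<lambda>a. map (\<lambda>b. [a, b, n - a - b]) [0..<Suc n - a]) [0..<Suc n])"

(* The representation of gl_3(C) (hence of sl_3(C)) on Sym^n(C^3) = homogeneous polynomials
   of degree n in x_0,x_1,x_2, where X acts as the derivation
   X . x^al = sum_{k,l} X_kl * al_l * x^(al - e_l + e_k).
   This is the irreducible representation with highest weight n f_1. *)
definition sym_rep :: "nat \<Rightarrow> complex mat \<Rightarrow> complex mat" where
  "sym_rep n X = (let B = sym_basis n; d = length B in
     mat d d (\<lambda>(i, j). let al = B ! j; be = B ! i in
       (\<Sum>k<3. \<Sum>l<3.
          if 0 < al ! l \<and> (al[l := al ! l - 1])[k := (al[l := al ! l - 1]) ! k + 1] = be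
          then X $$ (k, l) * of_nat (al ! l) else 0)))"

definition dual_rep :: "(complex mat \<Rightarrow> complex mat) \<Rightarrow> complex mat \<Rightarrow> complex mat" where
  "dual_rep \<rho> X = - transpose_mat (\<rho> X)"

(* Irreducible representation with highest weight l1 f_1 + l2 f_2, for weights on the
   border of the Weyl chamber (l1 = 0 or l2 = 0): Sym^l1 of C^3, resp. Sym^l2 of the dual of C^3.
   (Only used for border weights.) *)
definition border_irrep :: "nat \<Rightarrow> nat \<Rightarrow> complex mat \<Rightarrow> complex mat" where
  "border_irrep l1 l2 = (if l2 = 0 then sym_rep l1 else dual_rep (sym_rep l2))"

definition T_mat :: "complex mat" where
  "T_mat = mat 3 3 (\<lambda>(i, j). if i = j then [1, 0, -1] ! i else 0)"

(* eigenvalues with multiplicity (real parts; the matrices considered are hermitian), sorted *)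
definition sorted_eigs :: "complex mat \<Rightarrow> real list" where
  "sorted_eigs A = sorted_list_of_multiset (image_mset Re (proots (char_poly A)))"

(* cumulative mass  mu_A([0,x])  of the nearest neighbour distribution of A *)
definition nn_cdf :: "complex mat \<Rightarrow> real \<Rightarrow> real" where
  "nn_cdf A x = (let xs = sorted_eigs A; N = length xs in
     if xs ! 0 \<noteq> xs ! (N - 1) then
       real (card {j. j < N - 1 \<and>
               real N / (xs ! (N - 1) - xs ! 0) * (xs ! (j + 1) - xs ! j) \<le> x}) / real N
     else real (N - 1) / real N)"

definition ks_to_dirac0 :: "complex mat \<Rightarrow> real" where
  "ks_to_dirac0 A = (SUP x\<in>{0..}. \<bar>nn_cdf A x - 1\<bar>)"

end

theory Submission imports Defs begin

lemma proots_lin_list: "proots (\<Prod>a\<leftarrow>xs. [:- a, 1:]) = mset (xs::complex list)"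
proof (induction xs)
  case (Cons a xs)
  have nz: "(\<Prod>a\<leftarrow>xs. [:- a, 1:]) \<noteq> 0" by (auto simp: prod_list_zero_iff)
  have "proots (\<Prod>a\<leftarrow>a#xs. [:- a, 1:]) = proots [:- a, 1:] + proots (\<Prod>a\<leftarrow>xs. [:- a, 1:])"
    by (simp only: list.map prod_list.Cons, rule proots_mult) (use nz in auto)
  then show ?case using Cons by simp
qed simp

lemma sorted_eigs_diag:
  assumes A: "A \<in> carrier_mat d d" and ut: "upper_triangular A"
  shows "sorted_eigs A = sort (map Re (diag_mat A))"
proof -
  have "char_poly A = (\<Prod> a \<leftarrow> diag_mat A. [:- a, 1:])"
    by (rule char_poly_upper_triangular[OF A ut])
  then show ?thesis unfolding sorted_eigs_def by (simp add: proots_lin_list flip: mset_map)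
qed

lemma card_jumps:
  fixes xs :: "real list"
  assumes s: "sorted xs"
  shows "card {j. j < length xs - 1 \<and> xs ! (j+1) \<noteq> xs ! j} \<le> card (set xs)"
proof -
  let ?D = "{j. j < length xs - 1 \<and> xs ! (j+1) \<noteq> xs ! j}"
  have inj: "inj_on (\<lambda>j. xs ! (j+1)) ?D"
  proof (rule inj_onI)
    fix i j assume i: "i \<in> ?D" and j: "j \<in> ?D" and e: "xs ! (i+1) = xs ! (j+1)"
    show "i = j"
    proof (rule ccontr)
      assume "i \<noteq> j"
      then consider "i < j" | "j < i" by linarith
      then show False
      proof cases
        case 1
        have "xs ! (i+1) \<le> xs ! j" using 1 j s by (auto intro: sorted_nth_mono)
        moreover have "xs ! j \<le> xs ! (j+1)" using j s by (auto intro: sorted_nth_mono)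
        ultimately show False using j e by auto
      next
        case 2
        have "xs ! (j+1) \<le> xs ! i" using 2 i s by (auto intro: sorted_nth_mono)
        moreover have "xs ! i \<le> xs ! (i+1)" using i s by (auto intro: sorted_nth_mono)
        ultimately show False using i e by auto
      qed
    qed
  qed
  have "(\<lambda>j. xs ! (j+1)) ` ?D \<subseteq> set xs" by auto
  from card_inj_on_le[OF inj this] show ?thesis by simp
qed

lemma nn_cdf_bound:
  assumes e: "sorted_eigs A = xs" and s: "sorted xs" and ne: "xs \<noteq> []"
    and R: "set xs \<subseteq> R" "finite R" and x0: "0 \<le> x"
  shows "\<bar>nn_cdf A x - 1\<bar> \<le> (card R + 1) / length xs"
proof -
  define N where "N = length xs"
  have N: "N > 0" using ne N_def by auto
  have cR: "card (set xs) \<le> card R" using R by (simp add: card_mono)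
  show ?thesis
  proof (cases "xs ! 0 \<noteq> xs ! (N - 1)")
    case False
    then have "nn_cdf A x = real (N - 1) / real N" unfolding nn_cdf_def e N_def[symmetric] Let_def by simp
    moreover have "real (N - 1) / real N - 1 = - 1 / N" using N by (simp add: field_simps of_nat_diff)
    ultimately have "\<bar>nn_cdf A x - 1\<bar> = 1 / N" by simp
    also have "\<dots> \<le> (card R + 1) / N" using N by (simp add: divide_right_mono)
    finally show ?thesis by (simp add: N_def)
  next
    case True
    define C where "C = {j. j < N - 1 \<and>
               real N / (xs ! (N - 1) - xs ! 0) * (xs ! (j + 1) - xs ! j) \<le> x}"
    define E where "E = {j. j < N - 1 \<and> xs ! (j+1) = xs ! j}"
    define D where "D = {j. j < N - 1 \<and> xs ! (j+1) \<noteq> xs ! j}"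
    have c: "nn_cdf A x = real (card C) / real N"
      using True unfolding nn_cdf_def e N_def[symmetric] Let_def C_def by simp
    have CN: "card C \<le> N - 1" unfolding C_def
      by (rule order.trans[OF card_mono[of "{..<N-1}"]]) auto
    have ED: "E \<union> D = {..<N-1}" "E \<inter> D = {}" unfolding E_def D_def by auto
    then have "card E + card D = N - 1"
      by (metis card_Un_disjoint card_lessThan finite_Un finite_lessThan)
    moreover have "card D \<le> card R" using card_jumps[OF s] cR unfolding D_def N_def by linarith
    moreover have "card E \<le> card C"
      by (rule card_mono) (auto simp: C_def E_def x0)
    ultimately have "real N - 1 - card R \<le> card C" using N by linarith
    moreover have "real (card C) \<le> real N - 1" using CN N by linarith
    ultimately have "\<bar>real (card C) - real N\<bar> \<le> card R + 1" by linarith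
    moreover have "\<bar>nn_cdf A x - 1\<bar> = \<bar>real (card C) - real N\<bar> / N"
    proof -
      have "nn_cdf A x - 1 = (real (card C) - real N) / N" using c N by (simp add: field_simps)
      then show ?thesis by simp
    qed
    ultimately show ?thesis using N unfolding N_def[symmetric] by (simp add: divide_right_mono)
  qed
qed
lemma sym_basis_len: "2 * length (sym_basis n) = (n+1)*(n+2)"
proof -
  have "length (sym_basis n) = (\<Sum>a<Suc n. Suc n - a)"
    unfolding sym_basis_def by (simp add: length_concat sum_list_sum_nth atLeast0LessThan comp_def)
  also have "\<dots> = (\<Sum>a<Suc n. Suc a)"
    by (rule sum.reindex_bij_witness[of _ "\<lambda>a. n - a" "\<lambda>a. n - a"]) auto
  finally have e: "length (sym_basis n) = (\<Sum>a<Suc n. Suc a)" .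
  have "2 * (\<Sum>a<Suc n. Suc a) = (n+1)*(n+2)" for n
    by (induction n) (auto simp: sum.lessThan_Suc)
  then show ?thesis using e by simp
qed

lemma sym_basis_mem: "al \<in> set (sym_basis n) \<longleftrightarrow> (\<exists>a b. a + b \<le> n \<and> al = [a, b, n - a - b])"
proof
  assume "al \<in> set (sym_basis n)"
  then show "\<exists>a b. a + b \<le> n \<and> al = [a, b, n - a - b]" unfolding sym_basis_def by auto
next
  assume "\<exists>a b. a + b \<le> n \<and> al = [a, b, n - a - b]"
  then obtain a b where ab: "a + b \<le> n" "al = [a, b, n - a - b]" by blast
  have "a \<in> set [0..<Suc n]" "b \<in> set [0..<Suc n - a]" using ab by auto
  then show "al \<in> set (sym_basis n)" unfolding sym_basis_def using ab(2) by force
qed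

lemma sym_basis_distinct: "distinct (sym_basis n)"
  unfolding sym_basis_def
proof (rule distinct_concat)
  let ?f = "(\<lambda>a. map (\<lambda>b. [a, b, n - a - b]) [0..<Suc n - a])"
  have "inj_on ?f (set [0..<Suc n])"
  proof (rule inj_onI)
    fix a a' assume "a \<in> set [0..<Suc n]" "a' \<in> set [0..<Suc n]" "?f a = ?f a'"
    then have "?f a ! 0 = ?f a' ! 0" by simp
    moreover have "?f x ! 0 = [x, 0, n - x]" if "x \<in> set [0..<Suc n]" for x
      using that by (subst nth_map) (simp_all del: upt_Suc)
    ultimately show "a = a'" using \<open>a \<in> set [0..<Suc n]\<close> \<open>a' \<in> set [0..<Suc n]\<close>
      by simp
  qed
  then show "distinct (map ?f [0..<Suc n])" by (simp add: distinct_map)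
qed (auto simp: distinct_map inj_on_def)


lemma T_entry: "k < 3 \<Longrightarrow> l < 3 \<Longrightarrow> T_mat $$ (k,l) = (if k = l then [1,0,-1] ! k else 0)"
  unfolding T_mat_def by simp

lemma T_sum:
  fixes al :: "nat list"
  assumes al: "al = [a,b,c]"
  shows "(\<Sum>k<3. \<Sum>l<3.
          if 0 < al ! l \<and> (al[l := al ! l - 1])[k := (al[l := al ! l - 1]) ! k + 1] = be
          then T_mat $$ (k, l) * of_nat (al ! l) else 0)
     = (if al = be then of_nat a - of_nat c else 0)"
proof -
  have len: "length al = 3" using al by simp
  have "(\<Sum>k<3. \<Sum>l<3.
          if 0 < al ! l \<and> (al[l := al ! l - 1])[k := (al[l := al ! l - 1]) ! k + 1] = be
          then T_mat $$ (k, l) * of_nat (al ! l) else 0)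
      = (\<Sum>k<3. \<Sum>l<3. if k = l then (if al = be then [1,0,-1] ! l * of_nat (al ! l) else 0) else 0)"
  proof (intro sum.cong refl)
    fix k l assume k: "k \<in> {..<3::nat}" and l: "l \<in> {..<3::nat}"
    show "(if 0 < al ! l \<and> (al[l := al ! l - 1])[k := (al[l := al ! l - 1]) ! k + 1] = be
          then T_mat $$ (k, l) * of_nat (al ! l) else 0) =
         (if k = l then (if al = be then [1,0,-1] ! l * of_nat (al ! l) else (0::complex)) else 0)"
    proof (cases "k = l")
      case True
      then show ?thesis using k l len by (auto simp: T_entry)
    next
      case False
      then show ?thesis using k l by (simp add: T_entry)
    qed
  qed
  also have "\<dots> = (\<Sum>l<3. if al = be then [1,0,-1] ! l * of_nat (al ! l) else (0::complex))"
    by (simp add: sum.swap[of _ "{..<3::nat}"])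
  also have "\<dots> = (if al = be then (\<Sum>l<3. [1,0,-1] ! l * of_nat (al ! l)) else (0::complex))"
    by simp
  also have "(\<Sum>l<3. [1,0,-1] ! l * of_nat (al ! l)) = (of_nat a - of_nat c :: complex)"
    unfolding al by (simp add: numeral_3_eq_3)
  finally show ?thesis .
qed

lemma sym_entry:
  assumes i: "i < length (sym_basis n)" and j: "j < length (sym_basis n)"
  shows "\<exists>a b. a + b \<le> n \<and> sym_rep n T_mat $$ (i,j) =
     (if i = j then of_nat a - of_nat (n - a - b) else 0)"
proof -
  let ?B = "sym_basis n"
  have "?B ! j \<in> set ?B" using j by simp
  then obtain a b where ab: "a + b \<le> n" "?B ! j = [a, b, n - a - b]"
    using sym_basis_mem by blast
  have eq: "(?B ! j = ?B ! i) = (j = i)"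
    using nth_eq_iff_index_eq[OF sym_basis_distinct j i] .
  have "sym_rep n T_mat $$ (i,j) = (\<Sum>k<3. \<Sum>l<3.
          if 0 < (?B!j) ! l \<and> ((?B!j)[l := (?B!j) ! l - 1])[k := ((?B!j)[l := (?B!j) ! l - 1]) ! k + 1] = ?B!i
          then T_mat $$ (k, l) * of_nat ((?B!j) ! l) else 0)"
    unfolding sym_rep_def Let_def using i j by simp
  also have "\<dots> = (if ?B!j = ?B!i then of_nat a - of_nat (n - a - b) else 0)"
    by (rule T_sum[OF ab(2)])
  finally have X: "sym_rep n T_mat $$ (i,j) = (if ?B!j = ?B!i then of_nat a - of_nat (n - a - b) else 0)" .
  have "(if ?B!j = ?B!i then of_nat a - of_nat (n - a - b) else 0) = (if i = j then of_nat a - of_nat (n - a - b) else (0::complex))"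
    using eq by auto
  with X have "sym_rep n T_mat $$ (i,j) = (if i = j then of_nat a - of_nat (n - a - b) else (0::complex))"
    by simp
  then show ?thesis using ab(1) by blast
qed

lemma sym_carrier: "sym_rep n X \<in> carrier_mat (length (sym_basis n)) (length (sym_basis n))"
  unfolding sym_rep_def Let_def by simp

definition Rn :: "nat \<Rightarrow> real set" where "Rn n = real_of_int ` {- int n..int n}"

lemma Rn_card: "card (Rn n) = 2 * n + 1"
proof -
  have "card (Rn n) = card {- int n..int n}" unfolding Rn_def
    by (rule card_image) (simp add: inj_on_def)
  then show ?thesis by simp
qed

lemma good_mat:
  assumes "M = sym_rep n T_mat \<or> M = dual_rep (sym_rep n) T_mat"
  shows "M \<in> carrier_mat (length (sym_basis n)) (length (sym_basis n)) \<and>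
    (\<forall>i < length (sym_basis n). \<forall>j < length (sym_basis n). i \<noteq> j \<longrightarrow> M $$ (i,j) = 0) \<and>
    (\<forall>i < length (sym_basis n). Re (M $$ (i,i)) \<in> Rn n)"
proof -
  let ?d = "length (sym_basis n)"
  have P: "sym_rep n T_mat $$ (i,j) = 0" if "i < ?d" "j < ?d" "i \<noteq> j" for i j
    using sym_entry[OF that(1,2)] that(3) by auto
  have Q: "Re (sym_rep n T_mat $$ (i,i)) \<in> Rn n \<and> Re (- sym_rep n T_mat $$ (i,i)) \<in> Rn n"
    if ii: "i < ?d" for i
  proof -
    obtain a b where ab: "a + b \<le> n" "sym_rep n T_mat $$ (i,i) = of_nat a - of_nat (n - a - b)"
      using sym_entry[OF ii ii] by auto
    have "Re (sym_rep n T_mat $$ (i,i)) = real_of_int (int a - int (n - a - b))" using ab by simp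
    moreover have "Re (- sym_rep n T_mat $$ (i,i)) = real_of_int (- (int a - int (n - a - b)))" using ab by simp
    moreover have "int a - int (n - a - b) \<in> {- int n..int n}" "- (int a - int (n - a - b)) \<in> {- int n..int n}"
      using ab by auto
    ultimately show ?thesis unfolding Rn_def by (metis image_eqI)
  qed
  show ?thesis using assms
  proof
    assume M: "M = sym_rep n T_mat"
    show ?thesis unfolding M using P Q sym_carrier by blast
  next
    assume M: "M = dual_rep (sym_rep n) T_mat"
    have C: "sym_rep n T_mat \<in> carrier_mat ?d ?d" by (rule sym_carrier)
    have E: "M $$ (i,j) = - sym_rep n T_mat $$ (j,i)" if "i < ?d" "j < ?d" for i j
      unfolding M dual_rep_def using C that by simp
    have "M \<in> carrier_mat ?d ?d" unfolding M dual_rep_def using C by simp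
    then show ?thesis using P Q E by simp
  qed
qed

lemma ks_bound:
  assumes M: "M \<in> carrier_mat d d" and d: "0 < d"
    and off: "\<forall>i<d. \<forall>j<d. i \<noteq> j \<longrightarrow> M $$ (i,j) = 0"
    and dg: "\<forall>i<d. Re (M $$ (i,i)) \<in> R" and R: "finite R"
  shows "0 \<le> ks_to_dirac0 M \<and> ks_to_dirac0 M \<le> (card R + 1) / d"
proof -
  have ut: "upper_triangular M" unfolding upper_triangular_def using M off by auto
  define xs where "xs = sort (map Re (diag_mat M))"
  have e: "sorted_eigs M = xs" unfolding xs_def by (rule sorted_eigs_diag[OF M ut])
  have len: "length xs = d" unfolding xs_def diag_mat_def using M by simp
  have s: "sorted xs" unfolding xs_def by simp
  have ne: "xs \<noteq> []" using len d by auto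
  have sR: "set xs \<subseteq> R" unfolding xs_def diag_mat_def using M dg by auto
  have b: "\<bar>nn_cdf M x - 1\<bar> \<le> (card R + 1) / d" if "0 \<le> x" for x
    using nn_cdf_bound[OF e s ne sR R that] len by simp
  have up: "ks_to_dirac0 M \<le> (card R + 1) / d"
    unfolding ks_to_dirac0_def by (rule cSUP_least) (use b in auto)
  have "0 \<le> ks_to_dirac0 M"
    unfolding ks_to_dirac0_def
    by (rule cSUP_upper2[of _ _ 0]) (use b in \<open>auto intro!: bdd_aboveI2\<close>)
  with up show ?thesis by simp
qed

theorem mainTheorem4:
  fixes l1 l2 :: nat
  assumes "l1 = 0 \<or> l2 = 0" and "(l1, l2) \<noteq> (0, 0)"
  shows "(\<lambda>m. ks_to_dirac0 (border_irrep (m * l1) (m * l2) T_mat)) \<longlonglongrightarrow> 0"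
proof (rule tendsto_sandwich[of "\<lambda>_. 0" _ _ "\<lambda>m. 4 / real m"])
  have key: "0 \<le> ks_to_dirac0 (border_irrep (m * l1) (m * l2) T_mat) \<and>
     ks_to_dirac0 (border_irrep (m * l1) (m * l2) T_mat) \<le> 4 / real m" if m: "m \<ge> 1" for m
  proof -
    obtain n where n: "n \<ge> m" "border_irrep (m * l1) (m * l2) T_mat = sym_rep n T_mat \<or>
        border_irrep (m * l1) (m * l2) T_mat = dual_rep (sym_rep n) T_mat"
    proof (cases "l2 = 0")
      case True
      then have "l1 \<ge> 1" using assms by auto
      then have "m * l1 \<ge> m" by simp
      then show ?thesis using that[of "m * l1"] True unfolding border_irrep_def by simp
    next
      case False
      then have "l2 \<ge> 1" by auto
      then have "m * l2 \<ge> m" by simp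
      then show ?thesis using that[of "m * l2"] False m unfolding border_irrep_def by simp
    qed
    let ?M = "border_irrep (m * l1) (m * l2) T_mat"
    define d where "d = length (sym_basis n)"
    have dd: "2 * d = (n+1)*(n+2)" unfolding d_def by (rule sym_basis_len)
    then have d0: "0 < d" by auto
    have fin: "finite (Rn n)" unfolding Rn_def by simp
    from good_mat[OF n(2)] have g: "?M \<in> carrier_mat d d"
      "\<forall>i<d. \<forall>j<d. i \<noteq> j \<longrightarrow> ?M $$ (i,j) = 0" "\<forall>i<d. Re (?M $$ (i,i)) \<in> Rn n"
      unfolding d_def by auto
    from ks_bound[OF g(1) d0 g(2) g(3) fin]
    have kb: "0 \<le> ks_to_dirac0 ?M" "ks_to_dirac0 ?M \<le> (2 + 2 * real n) / real d"
      by (auto simp: Rn_card)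
    have "2 * real d = (real n + 1) * (real n + 2)"
      using arg_cong[OF dd, of real] by (simp add: algebra_simps)
    then have rd: "real d = (real n + 1) * (real n + 2) / 2" by simp
    have "(2 + 2 * real n) / real d = 4 / (real n + 2)"
    proof -
      have p: "(real n + 1) * (real n + 2) > 0" by simp
      have "(2 + 2 * real n) / ((real n + 1) * (real n + 2) / 2) = 4 * (real n + 1) / ((real n + 1) * (real n + 2))"
        using p by (simp add: field_simps)
      also have "\<dots> = 4 / (real n + 2)"
        by (subst mult.commute[of "real n + 1"], subst mult_divide_mult_cancel_right) auto
      finally show ?thesis unfolding rd .
    qed
    also have "\<dots> \<le> 4 / real m" using n(1) m by (simp add: frac_le)
    finally show ?thesis using kb by simp
  qed
  show "\<forall>\<^sub>F m in sequentially. 0 \<le> ks_to_dirac0 (border_irrep (m * l1) (m * l2) T_mat)"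
    using key by (auto intro: eventually_sequentiallyI[of 1])
  show "\<forall>\<^sub>F m in sequentially. ks_to_dirac0 (border_irrep (m * l1) (m * l2) T_mat) \<le> 4 / real m"
    using key by (auto intro: eventually_sequentiallyI[of 1])
  show "(\<lambda>_. 0) \<longlonglongrightarrow> (0::real)" by simp
  show "(\<lambda>m. 4 / real m) \<longlonglongrightarrow> 0" by (rule lim_const_over_n)
qed

end
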